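(* Let $\mathcal{S}$ be a compact surface without boundary and let $(\mathfrak{u},\mathfrak{l})$ be a labeled unicellular mobile on $\mathcal{S}$. Then: (i) If $A$ and $B$ are two distinct nontrivial arcs of $(\mathfrak{u},\mathfrak{l})$ whose intersection contains internal corners of $A$ or of $B$, then $A\subseteq B$ or $B\subseteq A$, and the level of the larger arc is strictly lower than the level of the smaller arc. (ii) The following three properties are equivalent: (a) for all $i\ge 1$, every nontrivial arc at level $i$ contains a corner with label $i+1$; (b) for all $i\ge 1$, every nontrivial arc at level $i$ has a set of internal corner labels of the form $\{i+1,i+2,\dots,m\}$ for some integer $m$; (c) for all $i\ge 2$ and for every corner with label $i$, either the first subsequent corner with label strictly smaller than $i$ has label $i-1$, or the last preceding corner with label strictly smaller than $i$ has label $i-1$. (iii) If the equivalent properties of (ii) hold, then for all $i\ge 2$, every arc at level $i$ is included in a unique arc at level $i-1$, and this arc is nontrivial; similarly, every corner labeled $i\ge 2$ is included in a unique arc at level $i-1$, and this arc is nontrivial.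
   Context: A map is a cellular embedding of a finite graph (loops and multiple edges allowed) into $\mathcal{S}$, considered up to homeomorphism; it is rooted when given a distinguished oriented corner (a corner is an angular sector between two consecutive half-edges around a vertex in the same face). A labeled unicellular mobile is a pair $(\mathfrak{u},\mathfrak{l})$ where $\mathfrak{u}$ is a rooted map of $\mathcal{S}$ with exactly one face, whose vertex set is partitioned as $V_\bullet(\mathfrak{u})\sqcup V_\circ(\mathfrak{u})$ so that every edge links a vertex of $V_\bullet(\mathfrak{u})$ to a vertex of $V_\circ(\mathfrak{u})$, the root vertex lies in $V_\circ(\mathfrak{u})$, and $\mathfrak{l}:V_\circ(\mathfrak{u})\to\{1,2,3,\dots\}$ is a function with minimum $1$. Since the face is a disk and the root orients it, the corners of $\mathfrak{u}$ are cyclically ordered along the contour of the face; only corners incident to vertices of $V_\circ(\mathfrak{u})$ are considered, in this cyclic order, and the label of a corner is the label of its vertex ("subsequent"/"preceding" refer to this cyclic order). An arc is a contiguous interval of two or more consecutive such corners whose first and last corners (its extremities) have labels strictly smaller than the labels of all other corners of the interval (its internal corners). An arc whose extremities have labels $i$ and $j$ is an $\{i,j\}$-arc and its level is $\max(i,j)$. An arc is trivial if it has exactly two corners. *)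

theory Defs
  imports Main
begin

text \<open>
  A labeled unicellular mobile is abstracted to the cyclic sequence of labels of
  its white corners (corners incident to vertices of V_circ), read along the
  contour of the unique face starting at the root corner.  The contour is unrolled periodically: position k (any nat)
  is the corner k mod length ls, with label lab ls k.
\<close>

definition mobile_labels :: "nat list \<Rightarrow> bool" where
  "mobile_labels ls = (ls \<noteq> [] \<and> (\<forall>x\<in>set ls. 1 \<le> x) \<and> 1 \<in> set ls)"

definition lab :: "nat list \<Rightarrow> nat \<Rightarrow> nat" where
  "lab ls k = ls ! (k mod length ls)"

text \<open>An interval of consecutive corners is a pair (s, m): it starts at corner
  s < length ls and consists of the m consecutive positions s, s+1, ..., s+m-1
  of the unrolled contour.\<close>

definition is_arc :: "nat list \<Rightarrow> nat \<times> nat \<Rightarrow> bool" where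
  "is_arc ls A = (case A of (s, m) \<Rightarrow>
     s < length ls \<and> 2 \<le> m \<and>
     (\<forall>j. 0 < j \<and> j < m - 1 \<longrightarrow> lab ls s < lab ls (s + j) \<and> lab ls (s + m - 1) < lab ls (s + j)))"

definition arc_level :: "nat list \<Rightarrow> nat \<times> nat \<Rightarrow> nat" where
  "arc_level ls A = (case A of (s, m) \<Rightarrow> max (lab ls s) (lab ls (s + m - 1)))"

definition trivial_arc :: "nat \<times> nat \<Rightarrow> bool" where
  "trivial_arc A = (snd A = 2)"

definition arc_corners :: "nat list \<Rightarrow> nat \<times> nat \<Rightarrow> nat set" where
  "arc_corners ls A = (case A of (s, m) \<Rightarrow> {(s + j) mod length ls | j. j < m})"

definition internal_corners :: "nat list \<Rightarrow> nat \<times> nat \<Rightarrow> nat set" where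
  "internal_corners ls A = (case A of (s, m) \<Rightarrow> {(s + j) mod length ls | j. 0 < j \<and> j < m - 1})"

definition arc_sub :: "nat list \<Rightarrow> nat \<times> nat \<Rightarrow> nat \<times> nat \<Rightarrow> bool" where
  "arc_sub ls A B = (\<exists>d. d + snd A \<le> snd B \<and> fst A = (fst B + d) mod length ls)"

definition prop_a :: "nat list \<Rightarrow> bool" where
  "prop_a ls = (\<forall>i\<ge>1. \<forall>A. is_arc ls A \<and> \<not> trivial_arc A \<and> arc_level ls A = i \<longrightarrow>
                 (\<exists>c\<in>arc_corners ls A. ls ! c = i + 1))"

definition prop_b :: "nat list \<Rightarrow> bool" where
  "prop_b ls = (\<forall>i\<ge>1. \<forall>A. is_arc ls A \<and> \<not> trivial_arc A \<and> arc_level ls A = i \<longrightarrow>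
                 (\<exists>m::nat. (\<lambda>c. ls ! c) ` internal_corners ls A = {i + 1..m}))"

text \<open>Property (ii)(c): the first subsequent corner with label < i (at distance j
  forward), resp. the last preceding corner with label < i (at distance j
  backward), has label i - 1.\<close>
definition prop_c :: "nat list \<Rightarrow> bool" where
  "prop_c ls = (\<forall>i\<ge>2. \<forall>c<length ls. ls ! c = i \<longrightarrow>
     (\<exists>j. 0 < j \<and> j < length ls \<and> lab ls (c + j) = i - 1 \<and>
          (\<forall>k. 0 < k \<and> k < j \<longrightarrow> i \<le> lab ls (c + k)))
   \<or> (\<exists>j. 0 < j \<and> j < length ls \<and> lab ls (c + length ls - j) = i - 1 \<and>
          (\<forall>k. 0 < k \<and> k < j \<longrightarrow> i \<le> lab ls (c + length ls - k))))"

end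

theory Submission
  imports Defs
begin


lemma lab_add_mult[simp]: "lab ls (x + k * length ls) = lab ls x"
  by (simp add: lab_def)

lemma lab_add_n[simp]: "lab ls (x + length ls) = lab ls x"
  by (simp add: lab_def)

lemma lab_n_add[simp]: "lab ls (length ls + x) = lab ls x"
  by (simp add: lab_def)

lemma lab_mod: "lab ls (x mod length ls + j) = lab ls (x + j)"
  by (simp add: lab_def mod_add_left_eq)

lemma lab_mod0: "lab ls (x mod length ls) = lab ls x"
  using lab_mod[of ls x 0] by simp

lemma nth_mod_lab: "ls ! ((s + j) mod length ls) = lab ls (s + j)"
  by (simp add: lab_def)

lemma mobile_n: "mobile_labels ls \<Longrightarrow> 0 < length ls"
  by (simp add: mobile_labels_def)

lemma lab_ge1: "mobile_labels ls \<Longrightarrow> 1 \<le> lab ls x"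
  unfolding mobile_labels_def lab_def
  by (metis length_greater_0_conv mod_less_divisor nth_mem)

lemma lab_lt_n: "c < length ls \<Longrightarrow> lab ls c = ls ! c"
  by (simp add: lab_def)

lemma exist_one:
  assumes m: "mobile_labels ls" and l: "lab ls q \<noteq> 1"
  shows "\<exists>j. 0 < j \<and> j < length ls \<and> lab ls (q + j) = 1"
    and "\<exists>j. 0 < j \<and> j < length ls \<and> lab ls (q + length ls - j) = 1"
proof -
  let ?n = "length ls"
  have n: "0 < ?n" using m mobile_n by blast
  obtain z where z: "z < ?n" "ls ! z = 1" using m unfolding mobile_labels_def
    by (metis in_set_conv_nth)
  define c where "c = q mod ?n"
  have c: "c < ?n" using n c_def by simp
  have lc: "lab ls c = lab ls q" using lab_mod0 c_def by metis
  have lz: "lab ls z = 1" using z by (simp add: lab_lt_n)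
  have lzn: "lab ls (z + ?n) = 1" using lz by simp
  have cz: "c \<noteq> z" using lc lz l by auto
  have fq: "lab ls (q + j) = lab ls (c + j)" for j using lab_mod c_def by metis
  have bq: "j < ?n \<Longrightarrow> lab ls (q + ?n - j) = lab ls (c + ?n - j)" for j
  proof -
    assume "j < ?n"
    then have "q + ?n - j = q + (?n - j)" "c + ?n - j = c + (?n - j)" by auto
    then show ?thesis using fq by metis
  qed
  show "\<exists>j. 0 < j \<and> j < ?n \<and> lab ls (q + j) = 1"
  proof (cases "c < z")
    case True
    then show ?thesis using fq[of "z - c"] lz z c by (intro exI[of _ "z - c"]) auto
  next
    case False
    then have "z < c" using cz by auto
    then show ?thesis using fq[of "z + ?n - c"] lzn z c
      by (intro exI[of _ "z + ?n - c"]) (auto simp: add.commute)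
  qed
  show "\<exists>j. 0 < j \<and> j < ?n \<and> lab ls (q + ?n - j) = 1"
  proof (cases "z < c")
    case True
    have "c + ?n - (c - z) = z + ?n" using True by auto
    then show ?thesis using bq[of "c - z"] lzn True c
      by (intro exI[of _ "c - z"]) auto
  next
    case False
    then have zc: "c < z" using cz by auto
    have "c + ?n - (c + ?n - z) = z" using zc z by auto
    then show ?thesis using bq[of "c + ?n - z"] lz zc z
      by (intro exI[of _ "c + ?n - z"]) auto
  qed
qed



definition fwd :: "nat list \<Rightarrow> nat \<Rightarrow> nat \<Rightarrow> nat" where
  "fwd ls i q = (LEAST j. 0 < j \<and> lab ls (q + j) < i)"
definition bwd :: "nat list \<Rightarrow> nat \<Rightarrow> nat \<Rightarrow> nat" where
  "bwd ls i q = (LEAST j. 0 < j \<and> j \<le> length ls \<and> lab ls (q + length ls - j) < i)"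
definition canon :: "nat list \<Rightarrow> nat \<Rightarrow> nat \<Rightarrow> nat \<times> nat" where
  "canon ls i q = ((q + length ls - bwd ls i q) mod length ls, bwd ls i q + fwd ls i q + 1)"

lemma fwd_props:
  assumes m: "mobile_labels ls" and l: "lab ls q \<noteq> 1" and i: "2 \<le> i"
  shows "0 < fwd ls i q" "fwd ls i q < length ls" "lab ls (q + fwd ls i q) < i"
    "\<And>k. 0 < k \<Longrightarrow> k < fwd ls i q \<Longrightarrow> i \<le> lab ls (q + k)"
proof -
  obtain j where j: "0 < j" "j < length ls" "lab ls (q + j) = 1" using exist_one(1)[OF m l] by blast
  define P where "P = (\<lambda>j. 0 < j \<and> lab ls (q + j) < i)"
  have Pj: "P j" using j i P_def by auto
  show "0 < fwd ls i q" "lab ls (q + fwd ls i q) < i" unfolding fwd_def using LeastI[of P j, OF Pj] P_def by auto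
  show "fwd ls i q < length ls" unfolding fwd_def using Least_le[of P j, OF Pj] j P_def by auto
  fix k assume "0 < k" "k < fwd ls i q"
  then show "i \<le> lab ls (q + k)" unfolding fwd_def using not_less_Least by fastforce
qed

lemma bwd_props:
  assumes m: "mobile_labels ls" and l: "lab ls q \<noteq> 1" and i: "2 \<le> i"
  shows "0 < bwd ls i q" "bwd ls i q < length ls" "lab ls (q + length ls - bwd ls i q) < i"
    "\<And>k. 0 < k \<Longrightarrow> k < bwd ls i q \<Longrightarrow> i \<le> lab ls (q + length ls - k)"
proof -
  obtain j where j: "0 < j" "j < length ls" "lab ls (q + length ls - j) = 1" using exist_one(2)[OF m l] by blast
  define P where "P = (\<lambda>j. 0 < j \<and> j \<le> length ls \<and> lab ls (q + length ls - j) < i)"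
  have Pj: "P j" using j i P_def by auto
  show "0 < bwd ls i q" "lab ls (q + length ls - bwd ls i q) < i" unfolding bwd_def using LeastI[of P j, OF Pj] P_def by auto
  show bl: "bwd ls i q < length ls" unfolding bwd_def using Least_le[of P j, OF Pj] j P_def by auto
  fix k assume k: "0 < k" "k < bwd ls i q"
  then have "\<not> (0 < k \<and> k \<le> length ls \<and> lab ls (q + length ls - k) < i)"
    unfolding bwd_def using not_less_Least by blast
  then show "i \<le> lab ls (q + length ls - k)" using k bl by auto
qed

lemma canon_props:
  assumes m: "mobile_labels ls" and l: "lab ls q = i" and i: "2 \<le> i"
  shows "is_arc ls (canon ls i q)" "\<not> trivial_arc (canon ls i q)"
    "lab ls (fst (canon ls i q)) = lab ls (q + length ls - bwd ls i q)"
    "lab ls (fst (canon ls i q) + snd (canon ls i q) - 1) = lab ls (q + fwd ls i q)"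
    "\<And>j. 0 < j \<Longrightarrow> j < snd (canon ls i q) - 1 \<Longrightarrow> i \<le> lab ls (fst (canon ls i q) + j)"
    "arc_level ls (canon ls i q) < i"
proof -
  let ?n = "length ls" let ?f = "fwd ls i q" let ?b = "bwd ls i q"
  have l1: "lab ls q \<noteq> 1" using l i by auto
  note F = fwd_props[OF m l1 i] and B = bwd_props[OF m l1 i]
  have n: "0 < ?n" using m mobile_n by blast
  have st: "lab ls ((q + ?n - ?b) mod ?n + j) = lab ls (q + ?n - ?b + j)" for j using lab_mod by metis
  show l0: "lab ls (fst (canon ls i q)) = lab ls (q + ?n - ?b)"
    unfolding canon_def using st[of 0] by simp
  have "q + ?n - ?b + (?b + ?f) = q + ?f + ?n" using B(2) by auto
  moreover have "lab ls (q + ?f + ?n) = lab ls (q + ?f)" by simp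
  ultimately show le: "lab ls (fst (canon ls i q) + snd (canon ls i q) - 1) = lab ls (q + ?f)"
    unfolding canon_def using st[of "?b + ?f"] by (simp only: fst_conv snd_conv) simp
  have int: "i \<le> lab ls (fst (canon ls i q) + j)" if j: "0 < j" "j < snd (canon ls i q) - 1" for j
  proof -
    have e: "lab ls (fst (canon ls i q) + j) = lab ls (q + ?n - ?b + j)" unfolding canon_def using st by simp
    consider "j < ?b" | "j = ?b" | "?b < j" by linarith
    then show ?thesis
    proof cases
      case 1
      then have "q + ?n - ?b + j = q + ?n - (?b - j)" using B(2) by auto
      then show ?thesis using e B(4)[of "?b - j"] 1 j by auto
    next
      case 2
      then have "q + ?n - ?b + j = q + ?n" using B(2) by auto
      then show ?thesis using e l by auto
    next
      case 3
      then have "q + ?n - ?b + j = q + (j - ?b) + ?n" using B(2) by auto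
      then have ee: "lab ls (q + ?n - ?b + j) = lab ls (q + (j - ?b))" by (metis lab_add_n)
      have "j - ?b < ?f" using j 3 unfolding canon_def by auto
      then show ?thesis using e ee F(4)[of "j - ?b"] 3 by auto
    qed
  qed
  then show "\<And>j. 0 < j \<Longrightarrow> j < snd (canon ls i q) - 1 \<Longrightarrow> i \<le> lab ls (fst (canon ls i q) + j)" by blast
  show "is_arc ls (canon ls i q)"
    unfolding is_arc_def
  proof (simp add: split_beta, intro conjI allI impI)
    show "fst (canon ls i q) < ?n" unfolding canon_def using n by simp
    show "2 \<le> snd (canon ls i q)" unfolding canon_def using F(1) B(1) by simp
    fix j assume j: "0 < j \<and> j < snd (canon ls i q) - Suc 0"
    then show "lab ls (fst (canon ls i q)) < lab ls (fst (canon ls i q) + j)"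
      "lab ls (fst (canon ls i q) + snd (canon ls i q) - Suc 0) < lab ls (fst (canon ls i q) + j)"
      using int[of j] l0 le B(3) F(3) by auto
  qed
  show "\<not> trivial_arc (canon ls i q)" unfolding trivial_arc_def canon_def using F(1) B(1) by simp
  show "arc_level ls (canon ls i q) < i" unfolding arc_level_def using l0 le B(3) F(3)
    by (simp add: split_beta)
qed



lemma fwd_mod: "fwd ls i (q mod length ls) = fwd ls i q"
  unfolding fwd_def using lab_mod by metis

lemma bwd_mod: "bwd ls i (q mod length ls) = bwd ls i q"
proof -
  have "lab ls (q mod length ls + length ls - j) = lab ls (q + length ls - j)" if "j \<le> length ls" for j
  proof -
    have "q mod length ls + length ls - j = q mod length ls + (length ls - j)"
         "q + length ls - j = q + (length ls - j)" using that by auto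
    then show ?thesis using lab_mod by metis
  qed
  then have "(\<lambda>j. 0 < j \<and> j \<le> length ls \<and> lab ls (q mod length ls + length ls - j) < i) =
             (\<lambda>j. 0 < j \<and> j \<le> length ls \<and> lab ls (q + length ls - j) < i)" by (intro ext) auto
  then show ?thesis unfolding bwd_def by simp
qed

lemma canon_mod:
  assumes m: "mobile_labels ls" and l: "lab ls q \<noteq> 1" and i: "2 \<le> i"
  shows "canon ls i (q mod length ls) = canon ls i q"
proof -
  have bl: "bwd ls i q \<le> length ls" using bwd_props(2)[OF m l i] by simp
  then have "q mod length ls + length ls - bwd ls i q = q mod length ls + (length ls - bwd ls i q)"
       "q + length ls - bwd ls i q = q + (length ls - bwd ls i q)" by auto
  then have "(q mod length ls + length ls - bwd ls i q) mod length ls = (q + length ls - bwd ls i q) mod length ls"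
    by (simp add: mod_add_left_eq)
  then show ?thesis unfolding canon_def by (simp add: fwd_mod bwd_mod)
qed

lemma canon_level:
  assumes m: "mobile_labels ls" and l: "lab ls q = i" and i: "2 \<le> i" and c: "prop_c ls"
  shows "arc_level ls (canon ls i q) = i - 1"
proof -
  let ?n = "length ls" let ?f = "fwd ls i q" let ?b = "bwd ls i q"
  have l1: "lab ls q \<noteq> 1" using l i by auto
  note F = fwd_props[OF m l1 i] and B = bwd_props[OF m l1 i] and C = canon_props[OF m l i]
  have n: "0 < ?n" using m mobile_n by blast
  define c where "c = q mod ?n"
  have cn: "c < ?n" using n c_def by simp
  have lc: "ls ! c = i" using l c_def by (simp add: lab_def)
  have fq: "lab ls (c + j) = lab ls (q + j)" for j using lab_mod c_def by metis
  have bq: "j \<le> ?n \<Longrightarrow> lab ls (c + ?n - j) = lab ls (q + ?n - j)" for j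
  proof -
    assume "j \<le> ?n"
    then have "q + ?n - j = q + (?n - j)" "c + ?n - j = c + (?n - j)" by auto
    then show ?thesis using fq by metis
  qed
  from c[unfolded prop_c_def, rule_format, OF i cn lc]
  have "lab ls (q + ?f) = i - 1 \<or> lab ls (q + ?n - ?b) = i - 1"
  proof
    assume "\<exists>j>0. j < ?n \<and> lab ls (c + j) = i - 1 \<and> (\<forall>k. 0 < k \<and> k < j \<longrightarrow> i \<le> lab ls (c + k))"
    then obtain j where j: "0 < j" "j < ?n" "lab ls (q + j) = i - 1" "\<forall>k. 0 < k \<and> k < j \<longrightarrow> i \<le> lab ls (q + k)"
      using fq by auto
    have "?f = j" unfolding fwd_def
    proof (rule Least_equality)
      show "0 < j \<and> lab ls (q + j) < i" using j i by auto
      fix y assume y: "0 < y \<and> lab ls (q + y) < i" show "j \<le> y"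
      proof (rule ccontr)
        assume "\<not> j \<le> y" then have "i \<le> lab ls (q + y)" using j(4) y by auto
        then show False using y by simp
      qed
    qed
    then show ?thesis using j by auto
  next
    assume "\<exists>j>0. j < ?n \<and> lab ls (c + ?n - j) = i - 1 \<and> (\<forall>k. 0 < k \<and> k < j \<longrightarrow> i \<le> lab ls (c + ?n - k))"
    then obtain j where j0: "0 < j" "j < ?n" "lab ls (c + ?n - j) = i - 1" "\<forall>k. 0 < k \<and> k < j \<longrightarrow> i \<le> lab ls (c + ?n - k)"
      by blast
    have j: "0 < j" "j < ?n" "lab ls (q + ?n - j) = i - 1" "\<forall>k. 0 < k \<and> k < j \<longrightarrow> i \<le> lab ls (q + ?n - k)"
    proof -
      show "0 < j" "j < ?n" using j0 by auto
      show "lab ls (q + ?n - j) = i - 1" using j0 bq[of j] by auto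
      show "\<forall>k. 0 < k \<and> k < j \<longrightarrow> i \<le> lab ls (q + ?n - k)"
      proof (intro allI impI)
        fix k assume k: "0 < k \<and> k < j"
        then have "k \<le> ?n" using j0 by auto
        then show "i \<le> lab ls (q + ?n - k)" using j0(4) k bq[of k] by auto
      qed
    qed
    have "?b = j" unfolding bwd_def
    proof (rule Least_equality)
      show "0 < j \<and> j \<le> ?n \<and> lab ls (q + ?n - j) < i" using j i by auto
      fix y assume y: "0 < y \<and> y \<le> ?n \<and> lab ls (q + ?n - y) < i" show "j \<le> y"
      proof (rule ccontr)
        assume "\<not> j \<le> y" then have "i \<le> lab ls (q + ?n - y)" using j(4) y by auto
        then show False using y by simp
      qed
    qed
    then show ?thesis using j by auto
  qed
  then show ?thesis unfolding arc_level_def using C(3,4) B(3) F(3) by (auto simp: split_beta)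
qed

lemma canon_unique:
  assumes m: "mobile_labels ls" and A: "is_arc ls (s, m')" and t: "0 < t" "t < m' - 1"
    and l: "lab ls (s + t) = i" and lev: "arc_level ls (s, m') = i - 1" and i: "2 \<le> i"
  shows "(s, m') = canon ls i (s + t)"
proof -
  let ?n = "length ls"
  have sn: "s < ?n" and int: "\<And>j. 0 < j \<Longrightarrow> j < m' - 1 \<Longrightarrow> lab ls s < lab ls (s + j) \<and> lab ls (s + m' - 1) < lab ls (s + j)"
    using A unfolding is_arc_def by auto
  have e: "lab ls s \<le> i - 1" "lab ls (s + m' - 1) \<le> i - 1" using lev unfolding arc_level_def by auto
  have lv: "max (lab ls s) (lab ls (s + m' - 1)) = i - 1" using lev unfolding arc_level_def by simp
  have int2: "i \<le> lab ls (s + j)" if "0 < j" "j < m' - 1" for j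
  proof -
    have "max (lab ls s) (lab ls (s + m' - 1)) < lab ls (s + j)" using int[OF that] by simp
    then show ?thesis using lv i by linarith
  qed
  have tn: "t < ?n"
  proof (rule ccontr)
    assume "\<not> t < ?n"
    then have "0 < ?n" "?n < m' - 1" using sn t by auto
    then have "i \<le> lab ls (s + ?n)" using int2 by blast
    then show False using e i by simp
  qed
  have f: "fwd ls i (s + t) = m' - 1 - t" unfolding fwd_def
  proof (rule Least_equality)
    have "s + t + (m' - 1 - t) = s + m' - 1" using t by auto
    then show "0 < m' - 1 - t \<and> lab ls (s + t + (m' - 1 - t)) < i" using t e i by auto
    fix y assume y: "0 < y \<and> lab ls (s + t + y) < i"
    show "m' - 1 - t \<le> y"
    proof (rule ccontr)
      assume "\<not> m' - 1 - t \<le> y"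
      then have "i \<le> lab ls (s + (t + y))" using int2[of "t + y"] y t by auto
      then show False using y by (simp add: add.assoc)
    qed
  qed
  have b: "bwd ls i (s + t) = t" unfolding bwd_def
  proof (rule Least_equality)
    have "s + t + ?n - t = s + ?n" by auto
    then show "0 < t \<and> t \<le> ?n \<and> lab ls (s + t + ?n - t) < i" using t e i tn by auto
    fix y assume y: "0 < y \<and> y \<le> ?n \<and> lab ls (s + t + ?n - y) < i"
    show "t \<le> y"
    proof (rule ccontr)
      assume yt: "\<not> t \<le> y"
      then have "s + t + ?n - y = s + (t - y) + ?n" by auto
      then have "lab ls (s + t + ?n - y) = lab ls (s + (t - y))" by (metis lab_add_n)
      moreover have "i \<le> lab ls (s + (t - y))" using int2[of "t - y"] y t yt by auto
      ultimately show False using y by simp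
    qed
  qed
  have "(s + t + ?n - t) mod ?n = s" using sn by simp
  then show ?thesis unfolding canon_def f b using t by auto
qed



lemma arc_int:
  assumes "is_arc ls (s, m)" "0 < j" "j < m - 1"
  shows "lab ls s < lab ls (s + j)" "lab ls (s + m - 1) < lab ls (s + j)" "arc_level ls (s, m) < lab ls (s + j)"
  using assms unfolding is_arc_def arc_level_def by auto

lemma c_step:
  assumes m: "mobile_labels ls" and c: "prop_c ls" and A: "is_arc ls (s, m)"
    and t: "0 < t" "t < m - 1"
  shows "(\<exists>t'. 0 < t' \<and> t' < m - 1 \<and> lab ls (s + t') = lab ls (s + t) - 1)
       \<or> lab ls s = lab ls (s + t) - 1 \<or> lab ls (s + m - 1) = lab ls (s + t) - 1"
proof -
  let ?n = "length ls" let ?v = "lab ls (s + t)"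
  have n: "0 < ?n" using m mobile_n by blast
  define q where "q = (s + t) mod ?n"
  have qn: "q < ?n" using n q_def by simp
  have v2: "2 \<le> ?v" using arc_int(1)[OF A t] lab_ge1[OF m, of s] by linarith
  have lq: "ls ! q = ?v" using q_def by (simp add: lab_def)
  have fq: "lab ls (q + j) = lab ls (s + t + j)" for j using lab_mod q_def by metis
  have bq: "j \<le> ?n \<Longrightarrow> lab ls (q + ?n - j) = lab ls (s + t + ?n - j)" for j
  proof -
    assume "j \<le> ?n"
    then have "q + ?n - j = q + (?n - j)" "s + t + ?n - j = s + t + (?n - j)" by auto
    then show ?thesis using fq by metis
  qed
  note I = arc_int[OF A]
  from c[unfolded prop_c_def, rule_format, OF v2 qn lq] show ?thesis
  proof
    assume "\<exists>j>0. j < ?n \<and> lab ls (q + j) = ?v - 1 \<and> (\<forall>k. 0 < k \<and> k < j \<longrightarrow> ?v \<le> lab ls (q + k))"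
    then obtain j where j: "0 < j" "lab ls (s + t + j) = ?v - 1" "\<And>k. 0 < k \<Longrightarrow> k < j \<Longrightarrow> ?v \<le> lab ls (s + t + k)"
      using fq by auto
    consider "t + j < m - 1" | "t + j = m - 1" | "t + j > m - 1" by linarith
    then show ?thesis
    proof cases
      case 1 then show ?thesis using j t by (intro disjI1 exI[of _ "t + j"]) (auto simp: add.assoc)
    next
      case 2 then have "s + t + j = s + m - 1" using t by auto
      then show ?thesis using j by auto
    next
      case 3
      have "s + t + (m - 1 - t) = s + m - 1" using t by auto
      then have "?v \<le> lab ls (s + m - 1)" using j(3)[of "m - 1 - t"] 3 t by auto
      then show ?thesis using I(2)[OF t] by simp
    qed
  next
    assume "\<exists>j>0. j < ?n \<and> lab ls (q + ?n - j) = ?v - 1 \<and> (\<forall>k. 0 < k \<and> k < j \<longrightarrow> ?v \<le> lab ls (q + ?n - k))"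
    then obtain j where j: "0 < j" "j < ?n" "lab ls (q + ?n - j) = ?v - 1" "\<And>k. 0 < k \<Longrightarrow> k < j \<Longrightarrow> ?v \<le> lab ls (q + ?n - k)"
      by blast
    have j2: "lab ls (s + t + ?n - j) = ?v - 1" using j(2,3) bq[of j] by simp
    consider "j < t" | "j = t" | "t < j" by linarith
    then show ?thesis
    proof cases
      case 1
      then have "s + t + ?n - j = s + (t - j) + ?n" by auto
      then have "lab ls (s + (t - j)) = ?v - 1" using j2 by (metis lab_add_n)
      then show ?thesis using 1 t by (intro disjI1 exI[of _ "t - j"]) auto
    next
      case 2
      then have "s + t + ?n - j = s + ?n" by auto
      then show ?thesis using j2 by simp
    next
      case 3
      have "s + t + ?n - t = s + ?n" by auto
      then have "?v \<le> lab ls s" using j(4)[of t] bq[of t] 3 t j(2) by auto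
      then show ?thesis using I(1)[OF t] by simp
    qed
  qed
qed

lemma nontriv_m: "is_arc ls (s, m) \<Longrightarrow> \<not> trivial_arc (s, m) \<Longrightarrow> 0 < (1::nat) \<and> 1 < m - 1"
  unfolding is_arc_def trivial_arc_def by auto

lemma c_imp_a:
  assumes m: "mobile_labels ls" and c: "prop_c ls"
  shows "prop_a ls"
  unfolding prop_a_def
proof (intro allI impI)
  fix i A assume i: "1 \<le> i" and H: "is_arc ls A \<and> \<not> trivial_arc A \<and> arc_level ls A = i"
  obtain s m' where sm: "A = (s, m')" by fastforce
  have Ar: "is_arc ls (s, m')" and nt: "\<not> trivial_arc (s, m')" and lev: "arc_level ls (s, m') = i"
    using H sm by auto
  have p1: "0 < (1::nat) \<and> 1 < m' - 1" using nontriv_m[OF Ar nt] .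
  obtain t where t: "0 < t \<and> t < m' - 1" and mn: "\<And>j. 0 < j \<and> j < m' - 1 \<Longrightarrow> lab ls (s + t) \<le> lab ls (s + j)"
    using ex_has_least_nat[of "\<lambda>j. 0 < j \<and> j < m' - 1" 1 "\<lambda>j. lab ls (s + j)", OF p1] by blast
  have gt: "i < lab ls (s + t)" using arc_int(3)[OF Ar] t lev by auto
  have le: "lab ls s \<le> i" "lab ls (s + m' - 1) \<le> i" using lev unfolding arc_level_def by auto
  have "lab ls (s + t) = i + 1"
  proof -
    from c_step[OF m c Ar] t
    have "(\<exists>t'. 0 < t' \<and> t' < m' - 1 \<and> lab ls (s + t') = lab ls (s + t) - 1)
       \<or> lab ls s = lab ls (s + t) - 1 \<or> lab ls (s + m' - 1) = lab ls (s + t) - 1" by blast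
    then show ?thesis
    proof (elim disjE exE conjE)
      fix t' assume "0 < t'" "t' < m' - 1" "lab ls (s + t') = lab ls (s + t) - 1"
      then have "lab ls (s + t) \<le> lab ls (s + t) - 1" using mn by metis
      then show ?thesis using gt by linarith
    next
      assume "lab ls s = lab ls (s + t) - 1" then show ?thesis using le gt by linarith
    next
      assume "lab ls (s + m' - 1) = lab ls (s + t) - 1" then show ?thesis using le gt by linarith
    qed
  qed
  moreover have "(s + t) mod length ls \<in> arc_corners ls A" unfolding sm arc_corners_def using t by auto
  ultimately show "\<exists>c\<in>arc_corners ls A. ls ! c = i + 1" by (metis nth_mod_lab)
qed



lemma int_img:
  "(\<lambda>c. ls ! c) ` internal_corners ls (s, m') = {lab ls (s + j) | j. 0 < j \<and> j < m' - 1}"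
proof (rule set_eqI, rule iffI)
  fix x assume "x \<in> (\<lambda>c. ls ! c) ` internal_corners ls (s, m')"
  then show "x \<in> {lab ls (s + j) | j. 0 < j \<and> j < m' - 1}"
    unfolding internal_corners_def by (auto simp: nth_mod_lab)
next
  fix x assume "x \<in> {lab ls (s + j) | j. 0 < j \<and> j < m' - 1}"
  then obtain j where j: "0 < j" "j < m' - 1" "x = lab ls (s + j)" by blast
  then have "(s + j) mod length ls \<in> internal_corners ls (s, m')" unfolding internal_corners_def by auto
  then show "x \<in> (\<lambda>c. ls ! c) ` internal_corners ls (s, m')" using j(3) by (metis image_eqI nth_mod_lab)
qed

lemma c_imp_b:
  assumes m: "mobile_labels ls" and c: "prop_c ls"
  shows "prop_b ls"
  unfolding prop_b_def
proof (intro allI impI)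
  fix i A assume i: "1 \<le> i" and H: "is_arc ls A \<and> \<not> trivial_arc A \<and> arc_level ls A = i"
  obtain s m' where sm: "A = (s, m')" by fastforce
  have Ar: "is_arc ls (s, m')" and nt: "\<not> trivial_arc (s, m')" and lev: "arc_level ls (s, m') = i"
    using H sm by auto
  have p1: "0 < (1::nat) \<and> 1 < m' - 1" using nontriv_m[OF Ar nt] .
  define Sl where "Sl = {lab ls (s + j) | j. 0 < j \<and> j < m' - 1}"
  have le: "lab ls s \<le> i" "lab ls (s + m' - 1) \<le> i" using lev unfolding arc_level_def by auto
  have fin: "finite Sl"
  proof -
    have "Sl \<subseteq> (\<lambda>j. lab ls (s + j)) ` {..<m'}" unfolding Sl_def by auto
    then show ?thesis by (rule finite_subset) simp
  qed
  have ne: "lab ls (s + 1) \<in> Sl" unfolding Sl_def using p1 by (auto intro!: exI[of _ 1])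
  have gt: "\<And>v. v \<in> Sl \<Longrightarrow> i < v" unfolding Sl_def using arc_int(3)[OF Ar] lev by auto
  have step: "v - 1 \<in> Sl" if v: "v \<in> Sl" "i + 1 < v" for v
  proof -
    obtain t where t: "0 < t" "t < m' - 1" "lab ls (s + t) = v" using v unfolding Sl_def by auto
    from c_step[OF m c Ar t(1,2)] t le v(2)
    have "\<exists>t'. 0 < t' \<and> t' < m' - 1 \<and> lab ls (s + t') = v - 1" by auto
    then show ?thesis unfolding Sl_def by (metis (mono_tags, lifting) mem_Collect_eq)
  qed
  have down: "\<forall>w. i + 1 \<le> w \<and> w \<le> v \<longrightarrow> w \<in> Sl" if "v \<in> Sl" for v
    using that
  proof (induction v rule: less_induct)
    case (less v)
    show ?case
    proof (intro allI impI)
      fix w assume w: "i + 1 \<le> w \<and> w \<le> v"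
      show "w \<in> Sl"
      proof (cases "w = v")
        case True then show ?thesis using less.prems by simp
      next
        case False
        then have "i + 1 < v" using w by auto
        then have "v - 1 \<in> Sl" using step less.prems by blast
        moreover have "v - 1 < v" using \<open>i + 1 < v\<close> by auto
        ultimately show ?thesis using less.IH[of "v - 1"] w False by auto
      qed
    qed
  qed
  have "Sl = {i + 1..Max Sl}"
  proof
    show "Sl \<subseteq> {i + 1..Max Sl}" using gt fin by (auto simp: Suc_le_eq)
    have "Max Sl \<in> Sl" using fin ne Max_in by blast
    then show "{i + 1..Max Sl} \<subseteq> Sl" using down by auto
  qed
  then show "\<exists>M. (\<lambda>c. ls ! c) ` internal_corners ls A = {i + 1..M}"
    unfolding sm int_img Sl_def by blast
qed

lemma b_imp_a:
  assumes m: "mobile_labels ls" and b: "prop_b ls"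
  shows "prop_a ls"
  unfolding prop_a_def
proof (intro allI impI)
  fix i A assume i: "1 \<le> i" and H: "is_arc ls A \<and> \<not> trivial_arc A \<and> arc_level ls A = i"
  obtain s m' where sm: "A = (s, m')" by fastforce
  have Ar: "is_arc ls (s, m')" and nt: "\<not> trivial_arc (s, m')"
    using H sm by auto
  have p1: "0 < (1::nat) \<and> 1 < m' - 1" using nontriv_m[OF Ar nt] .
  obtain M where M: "(\<lambda>c. ls ! c) ` internal_corners ls A = {i + 1..M}"
    using b[unfolded prop_b_def, rule_format, OF i H] by blast
  have "lab ls (s + 1) \<in> (\<lambda>c. ls ! c) ` internal_corners ls A" unfolding sm int_img using p1 by (auto intro!: exI[of _ 1])
  then have "i + 1 \<le> M" using M by auto
  then have "i + 1 \<in> (\<lambda>c. ls ! c) ` internal_corners ls A" using M by auto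
  then obtain c where c: "c \<in> internal_corners ls A" "ls ! c = i + 1" by auto
  have "c \<in> arc_corners ls A" using c(1) unfolding sm internal_corners_def arc_corners_def by auto
  then show "\<exists>c\<in>arc_corners ls A. ls ! c = i + 1" using c by blast
qed

lemma a_imp_c:
  assumes m: "mobile_labels ls" and a: "prop_a ls"
  shows "prop_c ls"
  unfolding prop_c_def
proof (intro allI impI)
  fix i c assume i: "2 \<le> i" and cn: "c < length ls" and lc: "ls ! c = i"
  let ?n = "length ls" let ?f = "fwd ls i c" let ?b = "bwd ls i c" let ?B = "canon ls i c"
  have l: "lab ls c = i" using lc cn by (simp add: lab_lt_n)
  have l1: "lab ls c \<noteq> 1" using l i by auto
  note F = fwd_props[OF m l1 i] and Bp = bwd_props[OF m l1 i] and C = canon_props[OF m l i]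
  obtain sB mB where sB: "?B = (sB, mB)" by fastforce
  define lv where "lv = arc_level ls ?B"
  have lvi: "lv < i" using C(6) lv_def by simp
  have lv1: "1 \<le> lv" unfolding lv_def arc_level_def sB using lab_ge1[OF m] by (simp add: le_max_iff_disj)
  have lvd: "lv = max (lab ls sB) (lab ls (sB + mB - 1))" unfolding lv_def arc_level_def sB by simp
  obtain x where x: "x \<in> arc_corners ls ?B" "ls ! x = lv + 1"
    using a[unfolded prop_a_def, rule_format, OF lv1, of ?B] C(1,2) lv_def by blast
  obtain j where j: "j < mB" "lab ls (sB + j) = lv + 1"
    using x unfolding sB arc_corners_def by (auto simp: nth_mod_lab)
  have "i \<le> lv + 1"
  proof (cases "0 < j \<and> j < mB - 1")
    case True then show ?thesis using C(5)[of j] sB j by auto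
  next
    case False
    then have "j = 0 \<or> j = mB - 1" using j by auto
    moreover have "2 \<le> mB" using C(1) sB unfolding is_arc_def by auto
    ultimately have "sB + j = sB \<or> sB + j = sB + mB - 1" by auto
    then have "lab ls (sB + j) \<le> lv" using lvd by (auto simp: le_max_iff_disj)
    then show ?thesis using j by simp
  qed
  then have lvv: "lv = i - 1" using lvi by simp
  have e1: "lab ls sB = lab ls (c + ?n - ?b)" using C(3) sB by simp
  have e2: "lab ls (sB + mB - 1) = lab ls (c + ?f)" using C(4) sB by simp
  have "lab ls (c + ?f) = i - 1 \<or> lab ls (c + ?n - ?b) = i - 1"
    using lvd lvv e1 e2 by (metis max_def)
  then show "(\<exists>j. 0 < j \<and> j < ?n \<and> lab ls (c + j) = i - 1 \<and> (\<forall>k. 0 < k \<and> k < j \<longrightarrow> i \<le> lab ls (c + k))) \<or>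
             (\<exists>j. 0 < j \<and> j < ?n \<and> lab ls (c + ?n - j) = i - 1 \<and> (\<forall>k. 0 < k \<and> k < j \<longrightarrow> i \<le> lab ls (c + ?n - k)))"
  proof
    assume "lab ls (c + ?f) = i - 1"
    then show ?thesis using F by (intro disjI1 exI[of _ ?f]) auto
  next
    assume "lab ls (c + ?n - ?b) = i - 1"
    then show ?thesis using Bp by (intro disjI2 exI[of _ ?b]) auto
  qed
qed



lemma uniq_from:
  assumes m: "mobile_labels ls" and i: "2 \<le> i" and B': "is_arc ls (s', m2)" and lev: "arc_level ls (s', m2) = i - 1"
    and t: "t < m2" and l: "lab ls (s' + t) = i"
  shows "(s', m2) = canon ls i ((s' + t) mod length ls)"
proof -
  have le: "lab ls s' \<le> i - 1" "lab ls (s' + m2 - 1) \<le> i - 1" using lev unfolding arc_level_def by auto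
  have m2: "2 \<le> m2" using B' unfolding is_arc_def by auto
  have t0: "0 < t" using le l i by (cases "t = 0") auto
  have t1: "t < m2 - 1"
  proof (rule ccontr)
    assume "\<not> t < m2 - 1" then have "s' + t = s' + m2 - 1" using t m2 by auto
    then show False using le l i by auto
  qed
  have "(s', m2) = canon ls i (s' + t)" using canon_unique[OF m B' t0 t1 l lev i] .
  also have "\<dots> = canon ls i ((s' + t) mod length ls)" using canon_mod[of ls "s' + t" i] m l i by auto
  finally show ?thesis .
qed

lemma iii_a:
  assumes m: "mobile_labels ls" and c: "prop_c ls" and i: "2 \<le> i"
    and A: "is_arc ls A" and lev: "arc_level ls A = i"
  shows "\<exists>B. is_arc ls B \<and> arc_level ls B = i - 1 \<and> arc_sub ls A B \<and> \<not> trivial_arc B \<and>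
                (\<forall>B'. is_arc ls B' \<and> arc_level ls B' = i - 1 \<and> arc_sub ls A B' \<longrightarrow> B' = B)"
proof -
  let ?n = "length ls"
  obtain s m' where sm: "A = (s, m')" by fastforce
  have Ar: "is_arc ls (s, m')" using A sm by simp
  have sn: "s < ?n" and m2: "2 \<le> m'" using Ar unfolding is_arc_def by auto
  have lv: "max (lab ls s) (lab ls (s + m' - 1)) = i" using lev sm unfolding arc_level_def by simp
  obtain p where p: "p = 0 \<or> p = m' - 1" and lp: "lab ls (s + p) = i"
  proof (cases "lab ls s = i")
    case True then show ?thesis using that[of 0] by simp
  next
    case False then have "lab ls (s + m' - 1) = i" using lv by (auto simp: max_def split: if_splits)
    then show ?thesis using that[of "m' - 1"] m2 by auto
  qed
  have pm: "p < m'" using p m2 by auto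
  let ?q = "s + p"
  let ?B = "canon ls i ?q"
  let ?f = "fwd ls i ?q" let ?b = "bwd ls i ?q"
  have l1: "lab ls ?q \<noteq> 1" using lp i by auto
  note F = fwd_props[OF m l1 i] and Bp = bwd_props[OF m l1 i] and C = canon_props[OF m lp i]
  have le: "lab ls s \<le> i" "lab ls (s + m' - 1) \<le> i" using lv by auto
  have sub: "arc_sub ls A ?B"
  proof (cases "p = 0")
    case True
    have "m' - 1 \<le> ?f"
    proof (rule ccontr)
      assume "\<not> m' - 1 \<le> ?f"
      then have "lab ls s < lab ls (s + ?f)" using arc_int(1)[OF Ar, of ?f] F(1) by auto
      then show False using F(3) True lp by simp
    qed
    moreover have "((?q + ?n - ?b) mod ?n + ?b) mod ?n = s"
    proof -
      have "((?q + ?n - ?b) mod ?n + ?b) mod ?n = (?q + ?n - ?b + ?b) mod ?n" by (rule mod_add_left_eq)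
      also have "?q + ?n - ?b + ?b = s + ?n" using Bp(2) True by auto
      finally show ?thesis using sn by simp
    qed
    ultimately show ?thesis unfolding arc_sub_def sm canon_def using m2
      by (intro exI[of _ ?b]) auto
  next
    case False
    then have pe: "p = m' - 1" using p by simp
    define bb where "bb = ?b"
    have b2: "bb < ?n" "0 < bb" "lab ls (?q + ?n - bb) < i" using Bp bb_def by auto
    have bm: "m' - 1 \<le> bb"
    proof (rule ccontr)
      assume a: "\<not> m' - 1 \<le> bb"
      have "?q + ?n - bb = s + (m' - 1 - bb) + ?n" using pe a b2(1) by auto
      then have "lab ls (?q + ?n - bb) = lab ls (s + (m' - 1 - bb))" by (metis lab_add_n)
      moreover have "lab ls (s + m' - 1) < lab ls (s + (m' - 1 - bb))" using arc_int(2)[OF Ar, of "m' - 1 - bb"] a b2(2) by auto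
      ultimately show False using b2(3) pe lp m2 by simp
    qed
    have "((?q + ?n - bb) mod ?n + (bb - (m' - 1))) mod ?n = s"
    proof -
      have "((?q + ?n - bb) mod ?n + (bb - (m' - 1))) mod ?n = (?q + ?n - bb + (bb - (m' - 1))) mod ?n" by (rule mod_add_left_eq)
      also have "?q + ?n - bb + (bb - (m' - 1)) = s + ?n" using b2(1) pe bm m2 by auto
      finally show ?thesis using sn by simp
    qed
    then have "((?q + ?n - ?b) mod ?n + (?b - (m' - 1))) mod ?n = s" using bb_def by simp
    moreover have "m' - 1 \<le> ?b" using bm bb_def by simp
    ultimately show ?thesis unfolding arc_sub_def sm canon_def using m2 F(1)
      by (intro exI[of _ "?b - (m' - 1)"]) auto
  qed
  show ?thesis
  proof (intro exI[of _ ?B] conjI allI impI)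
    show "is_arc ls ?B" "\<not> trivial_arc ?B" using C by auto
    show "arc_level ls ?B = i - 1" using canon_level[OF m lp i c] .
    show "arc_sub ls A ?B" using sub .
    fix B' assume H: "is_arc ls B' \<and> arc_level ls B' = i - 1 \<and> arc_sub ls A B'"
    obtain s' m2' where sm': "B' = (s', m2')" by fastforce
    obtain d where d: "d + m' \<le> m2'" "s = (s' + d) mod ?n" using H sm sm' unfolding arc_sub_def by auto
    have lt: "lab ls (s' + (d + p)) = i"
    proof -
      have "lab ls (s' + (d + p)) = lab ls ((s' + d) mod ?n + p)" by (simp add: lab_mod add.assoc)
      then show ?thesis using d(2) lp by simp
    qed
    have "B' = canon ls i ((s' + (d + p)) mod ?n)"
      using uniq_from[OF m i, of s' m2' "d + p"] H sm' d(1) pm lt by auto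
    also have "(s' + (d + p)) mod ?n = (s + p) mod ?n" using d(2) by (simp add: mod_add_left_eq add.assoc)
    also have "canon ls i ((s + p) mod ?n) = ?B" using canon_mod[OF m l1 i] .
    finally show "B' = ?B" .
  qed
qed

lemma iii_b:
  assumes m: "mobile_labels ls" and c: "prop_c ls" and i: "2 \<le> i"
    and cn: "cc < length ls" and lc: "ls ! cc = i"
  shows "\<exists>B. is_arc ls B \<and> arc_level ls B = i - 1 \<and> cc \<in> arc_corners ls B \<and> \<not> trivial_arc B \<and>
                (\<forall>B'. is_arc ls B' \<and> arc_level ls B' = i - 1 \<and> cc \<in> arc_corners ls B' \<longrightarrow> B' = B)"
proof -
  let ?n = "length ls" let ?B = "canon ls i cc" let ?b = "bwd ls i cc"
  have l: "lab ls cc = i" using lc cn by (simp add: lab_lt_n)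
  have l1: "lab ls cc \<noteq> 1" using l i by auto
  note F = fwd_props[OF m l1 i] and Bp = bwd_props[OF m l1 i] and C = canon_props[OF m l i]
  have "((cc + ?n - ?b) mod ?n + ?b) mod ?n = cc"
  proof -
    have "((cc + ?n - ?b) mod ?n + ?b) mod ?n = (cc + ?n - ?b + ?b) mod ?n" by (rule mod_add_left_eq)
    also have "cc + ?n - ?b + ?b = cc + ?n" using Bp(2) by auto
    finally show ?thesis using cn by simp
  qed
  then have inB: "cc \<in> arc_corners ls ?B" unfolding arc_corners_def canon_def
    by (auto intro!: exI[of _ ?b])
  show ?thesis
  proof (intro exI[of _ ?B] conjI allI impI)
    show "is_arc ls ?B" "\<not> trivial_arc ?B" using C by auto
    show "arc_level ls ?B = i - 1" using canon_level[OF m l i c] .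
    show "cc \<in> arc_corners ls ?B" using inB .
    fix B' assume H: "is_arc ls B' \<and> arc_level ls B' = i - 1 \<and> cc \<in> arc_corners ls B'"
    obtain s' m2' where sm': "B' = (s', m2')" by fastforce
    obtain t where t: "t < m2'" "cc = (s' + t) mod ?n" using H sm' unfolding arc_corners_def by auto
    have lt: "lab ls (s' + t) = i" using t(2) lc by (simp add: lab_def)
    have "B' = canon ls i ((s' + t) mod ?n)" using uniq_from[OF m i, of s' m2' t] H sm' t(1) lt by auto
    then show "B' = ?B" using t(2) by simp
  qed
qed



lemma mod_eq_shift: "(x::nat) mod n = y mod n \<Longrightarrow> x + (y div n) * n = y + (x div n) * n"
  by (metis add.commute add.left_commute div_mult_mod_eq)

lemma ua:
  assumes "is_arc ls (a, p)" "a0 = a + u * length ls" "a0 < y" "y < a0 + p - 1"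
  shows "lab ls a0 < lab ls y \<and> lab ls (a0 + p - 1) < lab ls y"
proof -
  have p2: "2 \<le> p" using assms(1) unfolding is_arc_def by auto
  have y: "y = a + (y - a0) + u * length ls" using assms by auto
  have "a0 + p - 1 = a + p - 1 + u * length ls" using assms p2 by auto
  then have e: "lab ls (a0 + p - 1) = lab ls (a + p - 1)" by (metis lab_add_mult)
  have "lab ls y = lab ls (a + (y - a0))" using y by (metis lab_add_mult)
  moreover have "lab ls a0 = lab ls a" using assms(2) by simp
  ultimately show ?thesis using arc_int(1,2)[OF assms(1), of "y - a0"] e assms by auto
qed

lemma ulev:
  assumes "is_arc ls (a, p)" "a0 = a + u * length ls"
  shows "arc_level ls (a, p) = max (lab ls a0) (lab ls (a0 + p - 1))"
proof -
  have p2: "2 \<le> p" using assms(1) unfolding is_arc_def by auto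
  have "a0 + p - 1 = a + p - 1 + u * length ls" using assms p2 by auto
  then have e: "lab ls (a0 + p - 1) = lab ls (a + p - 1)" by (metis lab_add_mult)
  show ?thesis unfolding arc_level_def using e assms(2) by simp
qed

lemma usub:
  assumes "a0 = a + u * length ls" "b0 = b + w * length ls" "b < length ls" "a0 \<le> b0" "b0 + q \<le> a0 + p"
  shows "arc_sub ls (b, q) (a, p)"
proof -
  have "(a + (b0 - a0)) mod length ls = (a + (b0 - a0) + u * length ls) mod length ls" by simp
  also have "a + (b0 - a0) + u * length ls = b + w * length ls" using assms by auto
  also have "(b + w * length ls) mod length ls = b" using assms(3) by simp
  finally show ?thesis unfolding arc_sub_def using assms by (intro exI[of _ "b0 - a0"]) auto
qed

lemma core:
  assumes A: "is_arc ls (a, p)" and B: "is_arc ls (b, q)" and ne: "(a, p) \<noteq> (b, q)"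
    and j: "0 < j" "j < p - 1" and k: "k < q" and eq: "(a + j) mod length ls = (b + k) mod length ls"
  shows "(arc_sub ls (a, p) (b, q) \<and> arc_level ls (b, q) < arc_level ls (a, p)) \<or>
         (arc_sub ls (b, q) (a, p) \<and> arc_level ls (a, p) < arc_level ls (b, q))"
proof -
  let ?n = "length ls"
  have an: "a < ?n" and p2: "2 \<le> p" using A unfolding is_arc_def by auto
  have bn: "b < ?n" and q2: "2 \<le> q" using B unfolding is_arc_def by auto
  define u where "u = (b + k) div ?n"
  define w where "w = (a + j) div ?n"
  define a0 where "a0 = a + u * ?n"
  define b0 where "b0 = b + w * ?n"
  have X: "a0 + j = b0 + k" using mod_eq_shift[OF eq] unfolding a0_def b0_def u_def w_def by simp
  note IA = ua[OF A a0_def] and IB = ua[OF B b0_def]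
  note LA = ulev[OF A a0_def] and LB = ulev[OF B b0_def]
  have amod: "a0 mod ?n = a" "b0 mod ?n = b" using an bn a0_def b0_def by auto
  consider "a0 = b0 \<and> p = q" | "a0 \<le> b0 \<and> b0 + q \<le> a0 + p \<and> \<not> (a0 = b0 \<and> p = q)"
    | "b0 \<le> a0 \<and> a0 + p \<le> b0 + q \<and> \<not> (a0 = b0 \<and> p = q)"
    | "b0 < a0 \<and> b0 + q < a0 + p" | "a0 < b0 \<and> a0 + p < b0 + q" by linarith
  then show ?thesis
  proof cases
    case 1 then have "a = b" using amod by simp
    then show ?thesis using 1 ne by simp
  next
    case 2
    have sub: "arc_sub ls (b, q) (a, p)" using usub[OF a0_def b0_def bn] 2 by auto
    have "max (lab ls a0) (lab ls (a0 + p - 1)) < max (lab ls b0) (lab ls (b0 + q - 1))"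
    proof (cases "a0 < b0")
      case True
      then have "lab ls a0 < lab ls b0 \<and> lab ls (a0 + p - 1) < lab ls b0" using IA[of b0] X j k by auto
      then show ?thesis by auto
    next
      case False
      then have "a0 = b0" "q < p" using 2 by auto
      then have "lab ls a0 < lab ls (b0 + q - 1) \<and> lab ls (a0 + p - 1) < lab ls (b0 + q - 1)"
        using IA[of "b0 + q - 1"] X j k q2 by auto
      then show ?thesis by auto
    qed
    then show ?thesis using sub LA LB by auto
  next
    case 3
    have sub: "arc_sub ls (a, p) (b, q)" using usub[OF b0_def a0_def an] 3 by auto
    have "max (lab ls b0) (lab ls (b0 + q - 1)) < max (lab ls a0) (lab ls (a0 + p - 1))"
    proof (cases "b0 < a0")
      case True
      then have "lab ls b0 < lab ls a0 \<and> lab ls (b0 + q - 1) < lab ls a0" using IB[of a0] X j k by auto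
      then show ?thesis by auto
    next
      case False
      then have "a0 = b0" "p < q" using 3 by auto
      then have "lab ls b0 < lab ls (a0 + p - 1) \<and> lab ls (b0 + q - 1) < lab ls (a0 + p - 1)"
        using IB[of "a0 + p - 1"] X j k p2 by auto
      then show ?thesis by auto
    qed
    then show ?thesis using sub LA LB by auto
  next
    case 4
    have "lab ls (b0 + q - 1) < lab ls a0" using IB[of a0] 4 X j k by auto
    moreover have "lab ls a0 < lab ls (b0 + q - 1)" using IA[of "b0 + q - 1"] 4 X j k by auto
    ultimately show ?thesis by simp
  next
    case 5
    have "lab ls (a0 + p - 1) < lab ls b0" using IA[of b0] 5 X j k by auto
    moreover have "lab ls b0 < lab ls (a0 + p - 1)" using IB[of "a0 + p - 1"] 5 X j k by auto
    ultimately show ?thesis by simp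
  qed
qed

lemma part1:
  assumes "is_arc ls A" "is_arc ls B" "A \<noteq> B"
    "arc_corners ls A \<inter> arc_corners ls B \<inter> (internal_corners ls A \<union> internal_corners ls B) \<noteq> {}"
  shows "(arc_sub ls A B \<and> arc_level ls B < arc_level ls A) \<or>
          (arc_sub ls B A \<and> arc_level ls A < arc_level ls B)"
proof -
  obtain a p where a: "A = (a, p)" by fastforce
  obtain b q where b: "B = (b, q)" by fastforce
  obtain x where x: "x \<in> arc_corners ls A" "x \<in> arc_corners ls B" "x \<in> internal_corners ls A \<or> x \<in> internal_corners ls B"
    using assms(4) by blast
  from x(3) show ?thesis
  proof
    assume "x \<in> internal_corners ls A"
    then obtain j where j: "0 < j" "j < p - 1" "x = (a + j) mod length ls" unfolding a internal_corners_def by auto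
    obtain k where k: "k < q" "x = (b + k) mod length ls" using x(2) unfolding b arc_corners_def by auto
    show ?thesis using core[of ls a p b q j k] assms(1-3) a b j k by auto
  next
    assume "x \<in> internal_corners ls B"
    then obtain j where j: "0 < j" "j < q - 1" "x = (b + j) mod length ls" unfolding b internal_corners_def by auto
    obtain k where k: "k < p" "x = (a + k) mod length ls" using x(1) unfolding a arc_corners_def by auto
    show ?thesis using core[of ls b q a p j k] assms(1-3) a b j k by auto
  qed
qed

theorem lemma3:
  fixes ls :: "nat list"
  assumes "mobile_labels ls"
  shows
   "(\<forall>A B. is_arc ls A \<and> is_arc ls B \<and> A \<noteq> B \<and> \<not> trivial_arc A \<and> \<not> trivial_arc B \<and>
        arc_corners ls A \<inter> arc_corners ls B \<inter> (internal_corners ls A \<union> internal_corners ls B) \<noteq> {}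
      \<longrightarrow> (arc_sub ls A B \<and> arc_level ls B < arc_level ls A) \<or>
          (arc_sub ls B A \<and> arc_level ls A < arc_level ls B))
  \<and> (prop_a ls = prop_b ls \<and> prop_b ls = prop_c ls)
  \<and> (prop_a ls \<longrightarrow> (\<forall>i\<ge>2.
        (\<forall>A. is_arc ls A \<and> arc_level ls A = i \<longrightarrow>
           (\<exists>B. is_arc ls B \<and> arc_level ls B = i - 1 \<and> arc_sub ls A B \<and> \<not> trivial_arc B \<and>
                (\<forall>B'. is_arc ls B' \<and> arc_level ls B' = i - 1 \<and> arc_sub ls A B' \<longrightarrow> B' = B)))
      \<and> (\<forall>c<length ls. ls ! c = i \<longrightarrow>
           (\<exists>B. is_arc ls B \<and> arc_level ls B = i - 1 \<and> c \<in> arc_corners ls B \<and> \<not> trivial_arc B \<and>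
                (\<forall>B'. is_arc ls B' \<and> arc_level ls B' = i - 1 \<and> c \<in> arc_corners ls B' \<longrightarrow> B' = B)))))"
proof -
  have ac: "prop_a ls = prop_c ls" using a_imp_c[OF assms] c_imp_a[OF assms] by blast
  have bc: "prop_b ls = prop_c ls" using c_imp_b[OF assms] b_imp_a[OF assms] a_imp_c[OF assms] by blast
  show ?thesis
  proof (intro conjI allI impI)
    fix A B assume H: "is_arc ls A \<and> is_arc ls B \<and> A \<noteq> B \<and> \<not> trivial_arc A \<and> \<not> trivial_arc B \<and>
        arc_corners ls A \<inter> arc_corners ls B \<inter> (internal_corners ls A \<union> internal_corners ls B) \<noteq> {}"
    then show "(arc_sub ls A B \<and> arc_level ls B < arc_level ls A) \<or>
          (arc_sub ls B A \<and> arc_level ls A < arc_level ls B)" using part1[of ls A B] by blast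
  next
    show "prop_a ls = prop_b ls" using ac bc by simp
  next
    show "prop_b ls = prop_c ls" using bc .
  next
    fix i A assume pa: "prop_a ls" and i: "2 \<le> i" and H: "is_arc ls A \<and> arc_level ls A = i"
    then show "\<exists>B. is_arc ls B \<and> arc_level ls B = i - 1 \<and> arc_sub ls A B \<and> \<not> trivial_arc B \<and>
                (\<forall>B'. is_arc ls B' \<and> arc_level ls B' = i - 1 \<and> arc_sub ls A B' \<longrightarrow> B' = B)"
      using iii_a[OF assms _ i] ac by blast
  next
    fix i c assume pa: "prop_a ls" and i: "2 \<le> i" and c: "c < length ls" and lc: "ls ! c = i"
    then show "\<exists>B. is_arc ls B \<and> arc_level ls B = i - 1 \<and> c \<in> arc_corners ls B \<and> \<not> trivial_arc B \<and>
                (\<forall>B'. is_arc ls B' \<and> arc_level ls B' = i - 1 \<and> c \<in> arc_corners ls B' \<longrightarrow> B' = B)"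
      using iii_b[OF assms _ i c lc] ac by blast
  qed
qed

end
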